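(* Suppose $x\in[1,2]^6$. Then $\frac{\partial\phi}{\partial x_j}(x)\ge0$ for each $j\in\{2,3,5,6\}$. In particular, for all $k_j\in[x_j,2]$, $j\in\{2,3,5,6\}$, $$\phi(x_1,x_2,x_3,x_4,x_5,x_6)\le\phi(x_1,k_2,k_3,x_4,k_5,k_6).$$
   Context: For $x=(x_1,\dots,x_6)\in\mathbb{R}^6_{\ge1}$ define $$\phi(x)=\frac{x_2x_3+x_5x_6+x_1x_2x_5+x_1x_3x_6-x_1^2x_4+x_4}{\sqrt{2x_1x_2x_6+x_1^2+x_2^2+x_6^2-1}\sqrt{2x_1x_3x_5+x_1^2+x_3^2+x_5^2-1}}.$$ *)

theory Defs
  imports Complex_Main
begin

definition phi :: "real \<Rightarrow> real \<Rightarrow> real \<Rightarrow> real \<Rightarrow> real \<Rightarrow> real \<Rightarrow> real" where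
  "phi x1 x2 x3 x4 x5 x6 =
     (x2*x3 + x5*x6 + x1*x2*x5 + x1*x3*x6 - x1^2*x4 + x4) /
     (sqrt (2*x1*x2*x6 + x1^2 + x2^2 + x6^2 - 1) * sqrt (2*x1*x3*x5 + x1^2 + x3^2 + x5^2 - 1))"

end

theory Submission
  imports Defs
begin
lemma gen:
  fixes p q r s c t :: real
  assumes g: "t^2+2*r*t+s > 0" and c: "c > 0"
  shows "((\<lambda>t. (p*t+q) / (sqrt (t^2+2*r*t+s) * c)) has_real_derivative
     (p*(t^2+2*r*t+s) - (p*t+q)*(t+r)) / ((t^2+2*r*t+s) * sqrt(t^2+2*r*t+s) * c)) (at t)"
proof -
  have sq: "((\<lambda>t. sqrt (t^2+2*r*t+s)) has_real_derivative (inverse (sqrt (t^2+2*r*t+s)) / 2 * (2*t+2*r))) (at t)"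
    by (rule DERIV_chain2[where g="\<lambda>t. t^2+2*r*t+s", OF DERIV_real_sqrt[OF g]]) (auto intro!: derivative_eq_intros)
  have "((\<lambda>t. (p*t+q) / (sqrt (t^2+2*r*t+s) * c)) has_real_derivative
     ((p * (sqrt (t^2+2*r*t+s) * c) - (p*t+q) * ((inverse (sqrt (t^2+2*r*t+s)) / 2 * (2*t+2*r)) * c)) / (sqrt (t^2+2*r*t+s) * c)^2)) (at t)"
    using g c by (auto intro!: derivative_eq_intros sq simp: power2_eq_square)
  moreover have "((p * (sqrt (t^2+2*r*t+s) * c) - (p*t+q) * ((inverse (sqrt (t^2+2*r*t+s)) / 2 * (2*t+2*r)) * c)) / (sqrt (t^2+2*r*t+s) * c)^2)
     = (p*(t^2+2*r*t+s) - (p*t+q)*(t+r)) / ((t^2+2*r*t+s) * sqrt(t^2+2*r*t+s) * c)"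
  proof -
    define S where "S = sqrt (t^2+2*r*t+s)"
    have S0: "S > 0" using g by (simp add: S_def)
    have SS: "t^2+2*r*t+s = S*S" using g by (simp add: S_def)
    show ?thesis unfolding SS[symmetric] S_def[symmetric] unfolding SS
      using S0 c by (simp add: field_simps power2_eq_square)
  qed
  ultimately show ?thesis by simp
qed

lemma lin: "(P1::real) \<ge> U + x1 \<Longrightarrow> P2 \<ge> V + x2 \<Longrightarrow> P3 \<le> 2*(x6+1) \<Longrightarrow> x6 \<le> U \<Longrightarrow> x6 \<le> V \<Longrightarrow> 1 \<le> x1 \<Longrightarrow> 1 \<le> x2 \<Longrightarrow> P1 + P2 - P3 \<ge> 0"
  by (smt (verit))

lemma Qnn:
  fixes x1 x2 x3 x4 x5 x6 :: real
  assumes "x1 \<in> {1..2}" "x2 \<in> {1..2}" "x3 \<in> {1..2}"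
      and "x4 \<in> {1..2}" "x5 \<in> {1..2}" "x6 \<in> {1..2}"
  shows "(x1^2-1) * (x5*(x2*x6+x1) + x4*(x1*x6+x2) - x3*(x6^2-1)) \<ge> 0"
proof -
  have h1: "x2*x6 \<ge> x6" using assms by (simp add: mult_le_cancel_right1)
  have h2: "x1*x6 \<ge> x6" using assms by (simp add: mult_le_cancel_right1)
  have a: "x5*(x2*x6+x1) \<ge> x2*x6+x1" using mult_right_mono[of 1 x5 "x2*x6+x1"] assms h1 by auto
  have b: "x4*(x1*x6+x2) \<ge> x1*x6+x2" using mult_right_mono[of 1 x4 "x1*x6+x2"] assms h2 by auto
  have c0: "x6^2-1 \<ge> 0" using assms by (simp add: one_le_power)
  have c: "x3*(x6^2-1) \<le> 2*(x6^2-1)" using mult_right_mono[of x3 2 "x6^2-1"] assms c0 by auto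
  have d0: "x6*x6 \<le> 2*x6" using assms by (intro mult_right_mono) auto
  have d: "2*(x6^2-1) \<le> 2*(x6+1)" proof - have "x6 \<le> 2" using assms by simp thus ?thesis unfolding power2_eq_square using d0 by (simp add: algebra_simps) qed
  have bd: "1 \<le> x1" "1 \<le> x2" using assms by auto
  have "x1^2 - 1 \<ge> 0" using assms by (simp add: one_le_power)
  moreover have "x5*(x2*x6+x1) + x4*(x1*x6+x2) - x3*(x6^2-1) \<ge> 0"
    by (rule lin[OF a b order_trans[OF c d] h1 h2 bd])
  ultimately show ?thesis by simp
qed

lemma dx2:
  fixes x1 x2 x3 x4 x5 x6 :: real
  assumes "x1 \<in> {1..2}" "x2 \<in> {1..2}" "x3 \<in> {1..2}"
      and "x4 \<in> {1..2}" "x5 \<in> {1..2}" "x6 \<in> {1..2}"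
  shows "\<exists>D. ((\<lambda>t. phi x1 t x3 x4 x5 x6) has_real_derivative D) (at x2) \<and> D \<ge> 0"
proof -
  define p where "p = x3 + x1*x5"
  define q where "q = x5*x6 + x1*x3*x6 - x1^2*x4 + x4"
  define r where "r = x1*x6"
  define s where "s = x1^2 + x6^2 - 1"
  define c where "c = sqrt (2*x1*x3*x5 + x1^2 + x3^2 + x5^2 - 1)"
  have B: "2*x1*x3*x5 + x1^2 + x3^2 + x5^2 - 1 > 0" using assms
    by auto (smt (verit) mult_nonneg_nonneg one_le_power)
  have c0: "c > 0" using B by (simp add: c_def)
  have g: "x2^2 + 2*r*x2 + s > 0" using assms unfolding r_def s_def
    by auto (smt (verit) mult_nonneg_nonneg one_le_power)
  have fe: "(\<lambda>t. phi x1 t x3 x4 x5 x6) = (\<lambda>t. (p*t+q) / (sqrt (t^2+2*r*t+s) * c))"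
  proof
    fix t
    have e1: "2*x1*t*x6 + x1^2 + t^2 + x6^2 - 1 = t^2+2*r*t+s" by (simp add: r_def s_def algebra_simps)
    have e2: "t*x3 + x5*x6 + x1*t*x5 + x1*x3*x6 - x1^2*x4 + x4 = p*t+q" by (simp add: p_def q_def algebra_simps)
    show "phi x1 t x3 x4 x5 x6 = (p*t+q) / (sqrt (t^2+2*r*t+s) * c)"
      unfolding phi_def e1 e2 c_def ..
  qed
  have num: "p*(x2^2+2*r*x2+s) - (p*x2+q)*(x2+r) = (x1^2-1) * (x5*(x2*x6+x1) + x4*(x1*x6+x2) - x3*(x6^2-1))"
    by (simp add: p_def q_def r_def s_def algebra_simps power2_eq_square)
  have "(p*(x2^2+2*r*x2+s) - (p*x2+q)*(x2+r)) / ((x2^2+2*r*x2+s) * sqrt(x2^2+2*r*x2+s) * c) \<ge> 0"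
    unfolding num using Qnn[OF assms] g c0 by simp
  then show ?thesis unfolding fe using gen[OF g c0] by blast
qed

lemma sym1: "phi x1 x2 x3 x4 x5 x6 = phi x1 x3 x2 x4 x6 x5"
  unfolding phi_def by (simp add: algebra_simps)
lemma sym2: "phi x1 x2 x3 x4 x5 x6 = phi x1 x6 x5 x4 x3 x2"
  unfolding phi_def by (simp add: algebra_simps)

lemma mono2:
  fixes x1 x2 x3 x4 x5 x6 k :: real
  assumes "x1 \<in> {1..2}" "x2 \<in> {1..2}" "x3 \<in> {1..2}"
      and "x4 \<in> {1..2}" "x5 \<in> {1..2}" "x6 \<in> {1..2}" "k \<in> {x2..2}"
  shows "phi x1 x2 x3 x4 x5 x6 \<le> phi x1 k x3 x4 x5 x6"
  using assms by (intro DERIV_nonneg_imp_nondecreasing[where f="\<lambda>t. phi x1 t x3 x4 x5 x6"])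
    (auto intro!: dx2)

theorem lemma3p4:
  fixes x1 x2 x3 x4 x5 x6 :: real
  assumes "x1 \<in> {1..2}" "x2 \<in> {1..2}" "x3 \<in> {1..2}"
      and "x4 \<in> {1..2}" "x5 \<in> {1..2}" "x6 \<in> {1..2}"
  shows "(\<exists>D. ((\<lambda>t. phi x1 t x3 x4 x5 x6) has_real_derivative D) (at x2) \<and> D \<ge> 0)
       \<and> (\<exists>D. ((\<lambda>t. phi x1 x2 t x4 x5 x6) has_real_derivative D) (at x3) \<and> D \<ge> 0)
       \<and> (\<exists>D. ((\<lambda>t. phi x1 x2 x3 x4 t x6) has_real_derivative D) (at x5) \<and> D \<ge> 0)
       \<and> (\<exists>D. ((\<lambda>t. phi x1 x2 x3 x4 x5 t) has_real_derivative D) (at x6) \<and> D \<ge> 0)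
       \<and> (\<forall>k2 k3 k5 k6. k2 \<in> {x2..2} \<longrightarrow> k3 \<in> {x3..2} \<longrightarrow> k5 \<in> {x5..2} \<longrightarrow> k6 \<in> {x6..2} \<longrightarrow>
            phi x1 x2 x3 x4 x5 x6 \<le> phi x1 k2 k3 x4 k5 k6)"
proof (intro conjI allI impI)
  show "\<exists>D. ((\<lambda>t. phi x1 t x3 x4 x5 x6) has_real_derivative D) (at x2) \<and> D \<ge> 0"
    using dx2[OF assms] .
  have e3: "(\<lambda>t. phi x1 x2 t x4 x5 x6) = (\<lambda>t. phi x1 t x2 x4 x6 x5)" using sym1 by blast
  show "\<exists>D. ((\<lambda>t. phi x1 x2 t x4 x5 x6) has_real_derivative D) (at x3) \<and> D \<ge> 0"
    unfolding e3 using assms by (intro dx2) auto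
  have e5: "(\<lambda>t. phi x1 x2 x3 x4 t x6) = (\<lambda>t. phi x1 t x6 x4 x2 x3)"
    by (metis sym1 sym2)
  show "\<exists>D. ((\<lambda>t. phi x1 x2 x3 x4 t x6) has_real_derivative D) (at x5) \<and> D \<ge> 0"
    unfolding e5 using assms by (intro dx2) auto
  have e6: "(\<lambda>t. phi x1 x2 x3 x4 x5 t) = (\<lambda>t. phi x1 t x5 x4 x3 x2)" using sym2 by blast
  show "\<exists>D. ((\<lambda>t. phi x1 x2 x3 x4 x5 t) has_real_derivative D) (at x6) \<and> D \<ge> 0"
    unfolding e6 using assms by (intro dx2) auto
  fix k2 k3 k5 k6
  assume k: "k2 \<in> {x2..2}" "k3 \<in> {x3..2}" "k5 \<in> {x5..2}" "k6 \<in> {x6..2}"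
  have "phi x1 x2 x3 x4 x5 x6 \<le> phi x1 k2 x3 x4 x5 x6" using assms k by (intro mono2) auto
  also have "\<dots> = phi x1 x3 k2 x4 x6 x5" by (rule sym1)
  also have "\<dots> \<le> phi x1 k3 k2 x4 x6 x5" using assms k by (intro mono2) auto
  also have "\<dots> = phi x1 x5 x6 x4 k2 k3" by (metis sym1 sym2)
  also have "\<dots> \<le> phi x1 k5 x6 x4 k2 k3" using assms k by (intro mono2) auto
  also have "\<dots> = phi x1 x6 k5 x4 k3 k2" by (rule sym1)
  also have "\<dots> \<le> phi x1 k6 k5 x4 k3 k2" using assms k by (intro mono2) auto
  also have "\<dots> = phi x1 k2 k3 x4 k5 k6" by (metis sym2)
  finally show "phi x1 x2 x3 x4 x5 x6 \<le> phi x1 k2 k3 x4 k5 k6" .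
qed

end
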